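(* Let $G$ be an unweighted graph (loops allowed) and let $F$ be a bipartite graph on vertices $v_1,\dots,v_m$. Let $H$ be an $\mathcal{H}$-blow-up of $F$ with blown-up graphs $H_1,\dots,H_m$, where $\mathcal{H}$ is the class of graphs that are cross-bipartite swapping in $G$. Then for every $U\subseteq V(F)$ and every $u\in V(F)\setminus U$, \[ \hom(H^{U},G)\le\hom(H^{U\cup\{u\}},G). \]
   Context: $\hom(\cdot,G)$ counts homomorphisms into $G$. The tensor product $H'\times K_2$ has vertex set $V(H')\times\{1,2\}$, with $(x,i)\sim(y,j)$ iff $xy\in E(H')$ and $i\ne j$. For $A,B\subseteq V(G)$, $\hom_{\mathrm b}(H'\times K_2,G[A,B])$ counts homomorphisms $H'\times K_2\to G$ mapping $V(H')\times\{1\}$ into $A$ and $V(H')\times\{2\}$ into $B$; $H'$ is cross-bipartite swapping in $G$ if $\hom(H',G[A])\hom(H',G[B])\le\hom_{\mathrm b}(H'\times K_2,G[A,B])$ for all $A,B\subseteq V(G)$. The $\mathcal{H}$-blow-up $H$ of $F$ is the disjoint union of $H_1,\dots,H_m\in\mathcal{H}$ (on vertex sets $V_1,\dots,V_m$) with all edges between $V_i$ and $V_j$ added whenever $v_iv_j\in E(F)$. For $U\subseteq V(F)$, the graph $H^{U}$ is defined as follows: take two vertex-disjoint copies of $H$, on $\bigsqcup_i W_i$ and $\bigsqcup_i W_i'$, where $W_i,W_i'$ are copies of $V_i$; then for each $j$ with $v_j\in U$, delete all edges inside $W_j$ and inside $W_j'$ and instead join the copy $w\in W_j$ of $x\in V_j$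 to the copy $w'\in W_j'$ of $y\in V_j$ whenever $xy\in E(H_j)$ (so the graph on $W_j\sqcup W_j'$ becomes $H_j\times K_2$ instead of $H_j\sqcup H_j$). All other edges are as in the two copies of $H$. *)

theory Defs
  imports "HOL-Library.FuncSet"
begin

definition graph :: "'a set \<Rightarrow> ('a \<times> 'a) set \<Rightarrow> bool" where
  "graph V E \<longleftrightarrow> finite V \<and> E \<subseteq> V \<times> V \<and> sym E"

definition loopless :: "('a \<times> 'a) set \<Rightarrow> bool" where
  "loopless E \<longleftrightarrow> (\<forall>x. (x, x) \<notin> E)"

definition hom_count :: "'a set \<Rightarrow> ('a \<times> 'a) set \<Rightarrow> 'b set \<Rightarrow> ('b \<times> 'b) set \<Rightarrow> nat" where
  "hom_count VH EH VG EG =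
     card {f \<in> VH \<rightarrow>\<^sub>E VG. \<forall>(x, y) \<in> EH. (f x, f y) \<in> EG}"

definition induced_edges :: "('b \<times> 'b) set \<Rightarrow> 'b set \<Rightarrow> ('b \<times> 'b) set" where
  "induced_edges EG A = EG \<inter> (A \<times> A)"

text \<open>Tensor product H' \<times> K2: vertex set V(H') \<times> {True, False} (True = 1, False = 2).\<close>
definition tensorK2_vertices :: "'a set \<Rightarrow> ('a \<times> bool) set" where
  "tensorK2_vertices VH = VH \<times> UNIV"

definition tensorK2_edges :: "('a \<times> 'a) set \<Rightarrow> (('a \<times> bool) \<times> ('a \<times> bool)) set" where
  "tensorK2_edges EH = {((x, i), (y, j)). (x, y) \<in> EH \<and> i \<noteq> j}"

definition hom_b :: "'a set \<Rightarrow> ('a \<times> 'a) set \<Rightarrow> ('b \<times> 'b) set \<Rightarrow> 'b set \<Rightarrow> 'b set \<Rightarrow> nat" where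
  "hom_b VH EH EG A B =
     card {f \<in> tensorK2_vertices VH \<rightarrow>\<^sub>E (A \<union> B).
             (\<forall>(p, q) \<in> tensorK2_edges EH. (f p, f q) \<in> EG) \<and>
             (\<forall>x \<in> VH. f (x, True) \<in> A \<and> f (x, False) \<in> B)}"

definition cross_bipartite_swapping ::
  "'a set \<Rightarrow> ('a \<times> 'a) set \<Rightarrow> 'b set \<Rightarrow> ('b \<times> 'b) set \<Rightarrow> bool" where
  "cross_bipartite_swapping VH EH VG EG \<longleftrightarrow>
     (\<forall>A B. A \<subseteq> VG \<longrightarrow> B \<subseteq> VG \<longrightarrow>
        hom_count VH EH A (induced_edges EG A) * hom_count VH EH B (induced_edges EG B)
          \<le> hom_b VH EH EG A B)"

text \<open>F is a graph on vertices 0..m-1 (standing for v_1,...,v_m); bipartite.\<close>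
definition bipartite :: "'a set \<Rightarrow> ('a \<times> 'a) set \<Rightarrow> bool" where
  "bipartite V E \<longleftrightarrow> (\<exists>S \<subseteq> V. \<forall>(x, y) \<in> E. (x \<in> S \<longleftrightarrow> y \<notin> S))"

definition blowup_vertices :: "nat \<Rightarrow> (nat \<Rightarrow> 'v set) \<Rightarrow> (nat \<times> 'v) set" where
  "blowup_vertices m VH = {(i, x). i < m \<and> x \<in> VH i}"

definition blowup_edges ::
  "nat \<Rightarrow> (nat \<times> nat) set \<Rightarrow> (nat \<Rightarrow> 'v set) \<Rightarrow> (nat \<Rightarrow> ('v \<times> 'v) set) \<Rightarrow> ((nat \<times> 'v) \<times> (nat \<times> 'v)) set" where
  "blowup_edges m EF VH EH =
     {((i, x), (j, y)). i < m \<and> j < m \<and> x \<in> VH i \<and> y \<in> VH j \<and>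
        ((i = j \<and> (x, y) \<in> EH i) \<or> (i, j) \<in> EF)}"

text \<open>The graph H^U: two copies of H (copy flag c :: bool, vertex (c, i, x) is the copy
of (i, x) in W_i if c = True, in W_i' if c = False).\<close>
definition HU_vertices :: "nat \<Rightarrow> (nat \<Rightarrow> 'v set) \<Rightarrow> (bool \<times> nat \<times> 'v) set" where
  "HU_vertices m VH = UNIV \<times> blowup_vertices m VH"

definition HU_edges ::
  "nat \<Rightarrow> (nat \<times> nat) set \<Rightarrow> (nat \<Rightarrow> 'v set) \<Rightarrow> (nat \<Rightarrow> ('v \<times> 'v) set) \<Rightarrow> nat set
     \<Rightarrow> ((bool \<times> nat \<times> 'v) \<times> (bool \<times> nat \<times> 'v)) set" where
  "HU_edges m EF VH EH U =
     {((c, i, x), (d, j, y)).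
        (c = d \<and> ((i, x), (j, y)) \<in> blowup_edges m EF VH EH \<and> \<not> (i = j \<and> i \<in> U))
      \<or> (c \<noteq> d \<and> i = j \<and> i \<in> U \<and> i < m \<and> x \<in> VH i \<and> y \<in> VH i \<and> (x, y) \<in> EH i)}"

end

theory Submission
  imports Defs
begin

definition mrg :: "'a set \<Rightarrow> ('a \<Rightarrow> 'b) \<Rightarrow> ('a \<Rightarrow> 'b) \<Rightarrow> 'a \<Rightarrow> 'b" where
  "mrg R g h = (\<lambda>v. if v \<in> R then g v else h v)"

lemma card_split:
  assumes fin: "finite V" "finite Y" and RV: "R \<subseteq> V"
  shows "card {f \<in> V \<rightarrow>\<^sub>E Y. P f} = (\<Sum>g\<in>R \<rightarrow>\<^sub>E Y. card {h \<in> (V-R) \<rightarrow>\<^sub>E Y. P (mrg R g h)})"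
proof -
  have "bij_betw (\<lambda>f. (restrict f R, restrict f (V-R))) {f \<in> V \<rightarrow>\<^sub>E Y. P f}
     (SIGMA g:R \<rightarrow>\<^sub>E Y. {h \<in> (V-R) \<rightarrow>\<^sub>E Y. P (mrg R g h)})"
  proof (rule bij_betw_byWitness[where f'="\<lambda>(g,h). mrg R g h"])
    have e1: "mrg R (restrict f R) (restrict f (V-R)) = f" if "f \<in> V \<rightarrow>\<^sub>E Y" for f
      using that RV by (auto simp: mrg_def fun_eq_iff PiE_def extensional_def)
    show "\<forall>a\<in>{f \<in> V \<rightarrow>\<^sub>E Y. P f}. (\<lambda>(g,h). mrg R g h) (restrict a R, restrict a (V - R)) = a"
      using e1 by auto
    show "\<forall>a'\<in>(SIGMA g:R \<rightarrow>\<^sub>E Y. {h \<in> (V-R) \<rightarrow>\<^sub>E Y. P (mrg R g h)}).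
        (\<lambda>f. (restrict f R, restrict f (V-R))) ((\<lambda>(g,h). mrg R g h) a') = a'"
      by (auto simp: mrg_def fun_eq_iff PiE_def extensional_def)
    show "(\<lambda>f. (restrict f R, restrict f (V-R))) ` {f \<in> V \<rightarrow>\<^sub>E Y. P f}
       \<subseteq> (SIGMA g:R \<rightarrow>\<^sub>E Y. {h \<in> (V-R) \<rightarrow>\<^sub>E Y. P (mrg R g h)})"
      using e1 RV by auto
    show "(\<lambda>(g,h). mrg R g h) ` (SIGMA g:R \<rightarrow>\<^sub>E Y. {h \<in> (V-R) \<rightarrow>\<^sub>E Y. P (mrg R g h)})
       \<subseteq> {f \<in> V \<rightarrow>\<^sub>E Y. P f}"
      using RV by (auto simp: mrg_def PiE_def extensional_def Pi_def)
  qed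
  then have "card {f \<in> V \<rightarrow>\<^sub>E Y. P f} = card (SIGMA g:R \<rightarrow>\<^sub>E Y. {h \<in> (V-R) \<rightarrow>\<^sub>E Y. P (mrg R g h)})"
    by (rule bij_betw_same_card)
  also have "\<dots> = (\<Sum>g\<in>R \<rightarrow>\<^sub>E Y. card {h \<in> (V-R) \<rightarrow>\<^sub>E Y. P (mrg R g h)})"
  proof (intro card_SigmaI ballI)
    show "finite (R \<rightarrow>\<^sub>E Y)" using fin RV by (auto intro!: finite_PiE dest: finite_subset)
    have "finite ((V-R) \<rightarrow>\<^sub>E Y)" using fin by (auto intro!: finite_PiE)
    then show "finite {h \<in> (V-R) \<rightarrow>\<^sub>E Y. P (mrg R g h)}" for g by simp
  qed
  finally show ?thesis .
qed

lemma HU_edges_mem: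
  "((c, i, x), (d, j, y)) \<in> HU_edges m EF VH EH U \<longleftrightarrow>
    (c = d \<and> i < m \<and> j < m \<and> x \<in> VH i \<and> y \<in> VH j \<and> ((i = j \<and> (x, y) \<in> EH i) \<or> (i, j) \<in> EF) \<and> \<not> (i = j \<and> i \<in> U))
    \<or> (c \<noteq> d \<and> i = j \<and> i \<in> U \<and> i < m \<and> x \<in> VH i \<and> y \<in> VH i \<and> (x, y) \<in> EH i)"
  by (simp add: HU_edges_def blowup_edges_def)

lemma fiber:
  fixes VG :: "'g set" and EG :: "('g \<times> 'g) set"
    and m :: nat and EF :: "(nat \<times> nat) set"
    and VH :: "nat \<Rightarrow> 'v set" and EH :: "nat \<Rightarrow> ('v \<times> 'v) set"
    and U :: "nat set" and u :: nat
  assumes G: "graph VG EG"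
    and F: "graph {..<m} EF" "loopless EF"
    and Hgraphs: "\<forall>i<m. graph (VH i) (EH i)"
    and Hswap: "\<forall>i<m. cross_bipartite_swapping (VH i) (EH i) VG EG"
    and u: "u < m" "u \<notin> U"
    and R_def: "R = {v \<in> HU_vertices m VH. fst (snd v) \<noteq> u}"
    and S_def: "S = HU_vertices m VH - R"
    and g: "g \<in> R \<rightarrow>\<^sub>E VG"
  shows "card {h \<in> S \<rightarrow>\<^sub>E VG. \<forall>(p, q) \<in> HU_edges m EF VH EH U. (mrg R g h p, mrg R g h q) \<in> EG}
      \<le> card {h \<in> S \<rightarrow>\<^sub>E VG. \<forall>(p, q) \<in> HU_edges m EF VH EH (insert u U). (mrg R g h p, mrg R g h q) \<in> EG}"
    (is "card ?L \<le> card ?L'")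
proof (cases "?L = {}")
  case True then show ?thesis unfolding True by simp
next
  case False
  then obtain h0 where h0: "h0 \<in> ?L" by blast
  have finVG: "finite VG" and symEG: "sym EG" and EGV: "EG \<subseteq> VG \<times> VG" using G by (auto simp: graph_def)
  have finVHu: "finite (VH u)" and EHu: "EH u \<subseteq> VH u \<times> VH u" using Hgraphs u by (auto simp: graph_def)
  have symEF: "sym EF" using F by (auto simp: graph_def)
  have EFne: "(u, j) \<in> EF \<Longrightarrow> j \<noteq> u" for j using F(2) by (auto simp: loopless_def)
  have Rmem: "(c, j, y) \<in> R \<longleftrightarrow> j < m \<and> y \<in> VH j \<and> j \<noteq> u" for c j y
    unfolding R_def HU_vertices_def blowup_vertices_def by simp
  have Smem: "(c, i, x) \<in> S \<longleftrightarrow> i = u \<and> x \<in> VH u" for c i x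
    using u unfolding S_def R_def HU_vertices_def blowup_vertices_def by auto
  have Sdef: "S = {(c, i, x). i = u \<and> x \<in> VH u}"
  proof (rule set_eqI)
    fix v :: "bool \<times> nat \<times> 'v"
    obtain c i x where v: "v = (c, i, x)" by (cases v) auto
    show "v \<in> S \<longleftrightarrow> v \<in> {(c, i, x). i = u \<and> x \<in> VH u}" unfolding v Smem by simp
  qed
  have Sprod: "S = (UNIV :: bool set) \<times> ({u} \<times> VH u)"
  proof (rule set_eqI)
    fix v :: "bool \<times> nat \<times> 'v"
    obtain c i x where v: "v = (c, i, x)" by (cases v) auto
    show "v \<in> S \<longleftrightarrow> v \<in> (UNIV :: bool set) \<times> ({u} \<times> VH u)" unfolding v Smem by simp
  qed
  have finS: "finite S" unfolding Sprod using finVHu by simp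
  define A where "A c = {a \<in> VG. \<forall>j y. j < m \<and> (u, j) \<in> EF \<and> y \<in> VH j \<longrightarrow> (a, g (c, j, y)) \<in> EG}" for c
  define HC where "HC c = {\<phi> \<in> VH u \<rightarrow>\<^sub>E A c. \<forall>(x, y) \<in> EH u. (\<phi> x, \<phi> y) \<in> induced_edges EG (A c)}" for c
  define HB where "HB = {f \<in> tensorK2_vertices (VH u) \<rightarrow>\<^sub>E (A True \<union> A False).
             (\<forall>(p, q) \<in> tensorK2_edges (EH u). (f p, f q) \<in> EG) \<and>
             (\<forall>x \<in> VH u. f (x, True) \<in> A True \<and> f (x, False) \<in> A False)}"
  have AVG: "A c \<subseteq> VG" for c unfolding A_def by auto
  have finA: "finite (A c)" for c using AVG finVG by (rule finite_subset)
  have finHC: "finite (HC c)" for c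
  proof -
    have "finite (VH u \<rightarrow>\<^sub>E A c)" using finVHu finA by (intro finite_PiE) auto
    then show ?thesis unfolding HC_def by (rule rev_finite_subset) blast
  qed
  have finL': "finite ?L'" using finite_PiE[OF finS finVG] by (rule rev_finite_subset) blast
  define \<Psi> where "\<Psi> h = (restrict (\<lambda>x. h (True, u, x)) (VH u), restrict (\<lambda>x. h (False, u, x)) (VH u))" for h :: "bool \<times> nat \<times> 'v \<Rightarrow> 'g"
  have step1: "card ?L \<le> card (HC True \<times> HC False)"
  proof (rule card_inj_on_le[where f = \<Psi>])
    show "inj_on \<Psi> ?L"
    proof (rule inj_onI)
      fix h1 h2 assume h1: "h1 \<in> ?L" and h2: "h2 \<in> ?L" and eq: "\<Psi> h1 = \<Psi> h2"
      show "h1 = h2"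
      proof (rule ext)
        fix v :: "bool \<times> nat \<times> 'v"
        obtain c i x where v: "v = (c, i, x)" by (cases v) auto
        show "h1 v = h2 v"
        proof (cases "v \<in> S")
          case True
          then have "i = u" "x \<in> VH u" using v Smem by simp_all
          have e2: "fst (\<Psi> h1) = fst (\<Psi> h2)" "snd (\<Psi> h1) = snd (\<Psi> h2)" using eq by simp_all
          have "restrict (\<lambda>x. h1 (c, u, x)) (VH u) = restrict (\<lambda>x. h2 (c, u, x)) (VH u)"
            using e2 by (cases c) (simp_all only: \<Psi>_def fst_conv snd_conv)
          from fun_cong[OF this, of x] have "h1 (c, u, x) = h2 (c, u, x)"
            using \<open>x \<in> VH u\<close> by (simp only: restrict_apply')
          then show ?thesis using v \<open>i = u\<close> by simp
        next
          case False
          have a1: "h1 \<in> S \<rightarrow>\<^sub>E VG" "h2 \<in> S \<rightarrow>\<^sub>E VG"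
            using h1 h2 by (simp_all only: mem_Collect_eq)
          have "h1 v = undefined" by (rule PiE_arb[OF a1(1) False])
          moreover have "h2 v = undefined" by (rule PiE_arb[OF a1(2) False])
          ultimately show ?thesis by (rule trans[OF _ sym])
        qed
      qed
    qed
    have inHC: "restrict (\<lambda>x. h (c, u, x)) (VH u) \<in> HC c" if h: "h \<in> ?L" for h c
    proof -
      have hh: "h \<in> S \<rightarrow>\<^sub>E VG \<and> (\<forall>(p, q) \<in> HU_edges m EF VH EH U. (mrg R g h p, mrg R g h q) \<in> EG)"
        using h by (simp only: mem_Collect_eq) blast
      note hS = conjunct1[OF hh] and hE = conjunct2[OF hh]
      have inA: "h (c, u, x) \<in> A c" if x: "x \<in> VH u" for x
      proof -
        have "(c, u, x) \<in> S" using x Smem by simp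
        then have "h (c, u, x) \<in> VG" using hS by (rule PiE_mem[rotated])
        moreover have "(h (c, u, x), g (c, j, y)) \<in> EG" if "j < m" "(u, j) \<in> EF" "y \<in> VH j" for j y
        proof -
          have "j \<noteq> u" using EFne that by auto
          have "((c, u, x), (c, j, y)) \<in> HU_edges m EF VH EH U"
            using that x u \<open>j \<noteq> u\<close> by (simp add: HU_edges_mem)
          then have "(mrg R g h (c, u, x), mrg R g h (c, j, y)) \<in> EG" using hE by blast
          then show ?thesis using Rmem[of c u x] Rmem[of c j y] that \<open>j \<noteq> u\<close> by (simp add: mrg_def)
        qed
        ultimately show ?thesis unfolding A_def by auto
      qed
      show ?thesis unfolding HC_def
      proof (intro CollectI conjI ballI)
        show "restrict (\<lambda>x. h (c, u, x)) (VH u) \<in> VH u \<rightarrow>\<^sub>E A c" using inA by auto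
        fix e assume e: "e \<in> EH u"
        obtain x y where xy: "e = (x, y)" by (cases e) auto
        have xyV: "x \<in> VH u" "y \<in> VH u" using EHu e xy by auto
        have "((c, u, x), (c, u, y)) \<in> HU_edges m EF VH EH U"
          using e xy xyV u by (simp add: HU_edges_mem)
        then have "(mrg R g h (c, u, x), mrg R g h (c, u, y)) \<in> EG" using hE by blast
        then have "(h (c, u, x), h (c, u, y)) \<in> EG" using Rmem by (simp add: mrg_def)
        then show "case e of (x', y') \<Rightarrow> (restrict (\<lambda>x. h (c, u, x)) (VH u) x', restrict (\<lambda>x. h (c, u, x)) (VH u) y') \<in> induced_edges EG (A c)"
          using xy xyV inA unfolding induced_edges_def by auto
      qed
    qed
    show "\<Psi> ` ?L \<subseteq> HC True \<times> HC False" using inHC unfolding \<Psi>_def by auto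
    show "finite (HC True \<times> HC False)" using finHC by simp
  qed
  have step2: "card (HC True \<times> HC False) \<le> card HB"
  proof -
    have "card (HC True \<times> HC False) = card (HC True) * card (HC False)" by (rule card_cartesian_product)
    also have "\<dots> = hom_count (VH u) (EH u) (A True) (induced_edges EG (A True)) * hom_count (VH u) (EH u) (A False) (induced_edges EG (A False))"
      unfolding HC_def hom_count_def by simp
    also have "\<dots> \<le> hom_b (VH u) (EH u) EG (A True) (A False)"
    proof -
      have "cross_bipartite_swapping (VH u) (EH u) VG EG" using Hswap u by blast
      then have "\<forall>A B. A \<subseteq> VG \<longrightarrow> B \<subseteq> VG \<longrightarrow>
        hom_count (VH u) (EH u) A (induced_edges EG A) * hom_count (VH u) (EH u) B (induced_edges EG B)
          \<le> hom_b (VH u) (EH u) EG A B" unfolding cross_bipartite_swapping_def .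
      then show ?thesis using AVG[of True] AVG[of False] by blast
    qed
    also have "\<dots> = card HB" unfolding hom_b_def HB_def by simp
    finally show ?thesis .
  qed
  define \<Phi> where "\<Phi> \<phi> = (\<lambda>(c, i, x). if i = u \<and> x \<in> VH u then \<phi> (x, c) else undefined)" for \<phi> :: "'v \<times> bool \<Rightarrow> 'g"
  have mR: "mrg R g h' (c, i, x) = g (c, i, x)" if "i \<noteq> u" "i < m" "x \<in> VH i" for h' c i x
    using that by (simp add: mrg_def Rmem)
  have mS: "mrg R g h' (c, u, x) = h' (c, u, x)" for h' c x
    by (simp add: mrg_def Rmem)
  have step3: "card HB \<le> card ?L'"
  proof (rule card_inj_on_le[where f = \<Phi>])
    show "finite ?L'" by (rule finL')
    have HBD: "\<phi> \<in> tensorK2_vertices (VH u) \<rightarrow>\<^sub>E (A True \<union> A False) \<and>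
             (\<forall>(p, q) \<in> tensorK2_edges (EH u). (\<phi> p, \<phi> q) \<in> EG) \<and>
             (\<forall>x \<in> VH u. \<phi> (x, True) \<in> A True \<and> \<phi> (x, False) \<in> A False)" if "\<phi> \<in> HB" for \<phi>
      using that unfolding HB_def by (simp only: mem_Collect_eq) blast
    show "inj_on \<Phi> HB"
    proof (rule inj_onI)
      fix \<phi>1 \<phi>2 assume p1: "\<phi>1 \<in> HB" and p2: "\<phi>2 \<in> HB" and eq: "\<Phi> \<phi>1 = \<Phi> \<phi>2"
      show "\<phi>1 = \<phi>2"
      proof (rule ext)
        fix w :: "'v \<times> bool"
        obtain x c where w: "w = (x, c)" by (cases w) auto
        show "\<phi>1 w = \<phi>2 w"
        proof (cases "x \<in> VH u")
          case True
          have "\<Phi> \<phi>1 (c, u, x) = \<Phi> \<phi>2 (c, u, x)" using eq by simp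
          then show ?thesis using True w unfolding \<Phi>_def by simp
        next
          case False
          then have nw: "w \<notin> tensorK2_vertices (VH u)" using w by (simp add: tensorK2_vertices_def)
          have "\<phi>1 w = undefined" by (rule PiE_arb[OF conjunct1[OF HBD[OF p1]] nw])
          moreover have "\<phi>2 w = undefined" by (rule PiE_arb[OF conjunct1[OF HBD[OF p2]] nw])
          ultimately show ?thesis by (rule trans[OF _ sym])
        qed
      qed
    qed
    show "\<Phi> ` HB \<subseteq> ?L'"
    proof
      fix h assume "h \<in> \<Phi> ` HB"
      then obtain \<phi> where ph: "\<phi> \<in> HB" and h: "h = \<Phi> \<phi>" by blast
      note ph' = HBD[OF ph]
      have phA: "\<phi> (x, c) \<in> A c" if "x \<in> VH u" for x c
        using conjunct2[OF conjunct2[OF ph']] that by (cases c) auto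
      have phE: "(\<phi> (x, c), \<phi> (y, d)) \<in> EG" if "(x, y) \<in> EH u" "c \<noteq> d" for x y c d
      proof -
        have "((x, c), (y, d)) \<in> tensorK2_edges (EH u)" using that by (simp add: tensorK2_edges_def)
        then show ?thesis using conjunct1[OF conjunct2[OF ph']] by blast
      qed
      have hval: "h (c, u, x) = \<phi> (x, c)" if "x \<in> VH u" for c x
        using that h unfolding \<Phi>_def by simp
      have hS: "h \<in> S \<rightarrow>\<^sub>E VG"
      proof (rule PiE_I)
        fix v assume v: "v \<in> S"
        obtain c i x where vv: "v = (c, i, x)" by (cases v) auto
        have "i = u" "x \<in> VH u" using v vv Smem by simp_all
        then have "h v = \<phi> (x, c)" using vv hval by simp
        then show "h v \<in> VG" using phA[OF \<open>x \<in> VH u\<close>, of c] AVG by auto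
      next
        fix v assume v: "v \<notin> S"
        obtain c i x where vv: "v = (c, i, x)" by (cases v) auto
        have "\<not> (i = u \<and> x \<in> VH u)" using v vv Smem by simp
        then show "h v = undefined" using vv h unfolding \<Phi>_def by auto
      qed
      have h0E: "\<forall>(p, q) \<in> HU_edges m EF VH EH U. (mrg R g h0 p, mrg R g h0 q) \<in> EG"
        using h0 by (simp only: mem_Collect_eq) blast
      have "(mrg R g h p, mrg R g h q) \<in> EG" if e: "(p, q) \<in> HU_edges m EF VH EH (insert u U)" for p q
      proof -
        obtain c i x where p: "p = (c, i, x)" by (cases p) auto
        obtain d j y where q: "q = (d, j, y)" by (cases q) auto
        have e': "((c, i, x), (d, j, y)) \<in> HU_edges m EF VH EH (insert u U)" using e p q by simp
        note E = e'[unfolded HU_edges_mem]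
        have ij: "i < m" "j < m" "x \<in> VH i" "y \<in> VH j"
          using E by auto
        consider "i \<noteq> u" "j \<noteq> u" | "i = u" "j \<noteq> u" | "i \<noteq> u" "j = u" | "i = u" "j = u" by blast
        then show ?thesis
        proof cases
          case 1
          then have "((c, i, x), (d, j, y)) \<in> HU_edges m EF VH EH U" using E by (simp add: HU_edges_mem)
          then have "(mrg R g h0 (c, i, x), mrg R g h0 (d, j, y)) \<in> EG" using h0E by blast
          then show ?thesis using 1 p q ij mR by simp
        next
          case 2
          then have "c = d" "(u, j) \<in> EF" using E by auto
          then have "(\<phi> (x, c), g (c, j, y)) \<in> EG" using phA[of x c] ij 2 unfolding A_def by auto
          then show ?thesis using 2 p q ij mR mS hval \<open>c = d\<close> by simp
        next
          case 3
          then have "c = d" "(i, u) \<in> EF" using E by auto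
          then have "(u, i) \<in> EF" using symEF by (auto dest: symD)
          then have "(\<phi> (y, c), g (c, i, x)) \<in> EG" using phA[of y c] ij 3 unfolding A_def by auto
          then have "(g (c, i, x), \<phi> (y, c)) \<in> EG" using symEG by (auto dest: symD)
          then show ?thesis using 3 p q ij mR mS hval \<open>c = d\<close> by simp
        next
          case 4
          then have "c \<noteq> d" "(x, y) \<in> EH u" using E by auto
          then show ?thesis using 4 p q ij mS hval phE by simp
        qed
      qed
      then have "\<forall>(p, q) \<in> HU_edges m EF VH EH (insert u U). (mrg R g h p, mrg R g h q) \<in> EG" by blast
      then show "h \<in> ?L'" using hS by (simp only: mem_Collect_eq)
    qed
  qed
  show ?thesis using step1 step2 step3 by linarith
qed


theorem lemma5p2:
  fixes VG :: "'g set" and EG :: "('g \<times> 'g) set"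
    and m :: nat and EF :: "(nat \<times> nat) set"
    and VH :: "nat \<Rightarrow> 'v set" and EH :: "nat \<Rightarrow> ('v \<times> 'v) set"
    and U :: "nat set" and u :: nat
  assumes G: "graph VG EG"
    and F: "graph {..<m} EF" "loopless EF" "bipartite {..<m} EF"
    and Hgraphs: "\<forall>i<m. graph (VH i) (EH i)"
    and Hswap: "\<forall>i<m. cross_bipartite_swapping (VH i) (EH i) VG EG"
    and U: "U \<subseteq> {..<m}"
    and u: "u < m" "u \<notin> U"
  shows "hom_count (HU_vertices m VH) (HU_edges m EF VH EH U) VG EG
           \<le> hom_count (HU_vertices m VH) (HU_edges m EF VH EH (insert u U)) VG EG"
proof -
  define V where "V = HU_vertices m VH"
  define R where "R = {v \<in> HU_vertices m VH. fst (snd v) \<noteq> u}"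
  have finVG: "finite VG" using G by (simp add: graph_def)
  have "blowup_vertices m VH = Sigma {..<m} VH" unfolding blowup_vertices_def by auto
  moreover have "finite (Sigma {..<m} VH)" using Hgraphs by (intro finite_SigmaI) (auto simp: graph_def)
  ultimately have finV: "finite V" unfolding V_def HU_vertices_def by simp
  have RV: "R \<subseteq> V" unfolding R_def V_def by blast
  have "hom_count (HU_vertices m VH) (HU_edges m EF VH EH U) VG EG
     = (\<Sum>g\<in>R \<rightarrow>\<^sub>E VG. card {h \<in> (V-R) \<rightarrow>\<^sub>E VG. \<forall>(p, q) \<in> HU_edges m EF VH EH U. (mrg R g h p, mrg R g h q) \<in> EG})"
    unfolding hom_count_def V_def[symmetric] using card_split[OF finV finVG RV] .
  also have "\<dots> \<le> (\<Sum>g\<in>R \<rightarrow>\<^sub>E VG. card {h \<in> (V-R) \<rightarrow>\<^sub>E VG. \<forall>(p, q) \<in> HU_edges m EF VH EH (insert u U). (mrg R g h p, mrg R g h q) \<in> EG})"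
  proof (rule sum_mono)
    fix g assume g: "g \<in> R \<rightarrow>\<^sub>E VG"
    show "card {h \<in> (V-R) \<rightarrow>\<^sub>E VG. \<forall>(p, q) \<in> HU_edges m EF VH EH U. (mrg R g h p, mrg R g h q) \<in> EG}
      \<le> card {h \<in> (V-R) \<rightarrow>\<^sub>E VG. \<forall>(p, q) \<in> HU_edges m EF VH EH (insert u U). (mrg R g h p, mrg R g h q) \<in> EG}"
      by (rule fiber[OF G F(1) F(2) Hgraphs Hswap u R_def _ g]) (simp add: V_def)
  qed
  also have "\<dots> = hom_count (HU_vertices m VH) (HU_edges m EF VH EH (insert u U)) VG EG"
    unfolding hom_count_def V_def[symmetric] using card_split[OF finV finVG RV, symmetric] .
  finally show ?thesis .
qed

end
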